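(* Let $\alpha\ge0$ and let $b_1,b_2\in C[0,1]$ satisfy $b_1(x)\ge b_2(x)>1$ on $[0,1]$. For $i=1,2$ let $(n_i,E_i)$ be the interior subsonic solution of $\big(1-\frac{1}{n^2}\big)n_x=nE-\alpha$, $E_x=n-b_i(x)$ on $(0,1)$, $n(0)=n(1)=1$. Then $n_1(x)\ge n_2(x)$ for all $x\in[0,1]$.
   Context: For a doping profile $b\in C[0,1]$ with $\inf_{[0,1]}b>1$ and $\alpha\ge0$, a pair $(n,E)$ is an interior subsonic solution if: $(n-1)^2\in H_0^1(0,1)$; $n>1$ on $(0,1)$; $n(0)=n(1)=1$; for every $\varphi\in H_0^1(0,1)$, $\int_0^1\big(\frac1n-\frac1{n^3}\big)n_x\varphi_x\,dx+\alpha\int_0^1\frac{\varphi_x}{n}\,dx+\int_0^1(n-b)\varphi\,dx=0$; and $E(x)=\alpha+\int_0^x(n-b)\,dy$. Such a solution is known to exist and be unique. *)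

theory Defs
  imports "HOL-Analysis.Analysis"
begin

text \<open>Membership in H_0^1(0,1), in its one-dimensional (absolutely continuous
  representative) form: u is the indefinite integral on [0,1] of a square-integrable
  function g (its weak derivative), and u vanishes at both endpoints.\<close>
definition H01_with_deriv :: "(real \<Rightarrow> real) \<Rightarrow> (real \<Rightarrow> real) \<Rightarrow> bool" where
  "H01_with_deriv u g \<longleftrightarrow>
     g \<in> borel_measurable (lebesgue_on {0..1}) \<and>
     integrable (lebesgue_on {0..1}) (\<lambda>x. (g x)\<^sup>2) \<and>
     (\<forall>x\<in>{0..1}. u x = integral\<^sup>L (lebesgue_on {0..x}) g) \<and>
     u 0 = 0 \<and> u 1 = 0"

definition in_H01 :: "(real \<Rightarrow> real) \<Rightarrow> bool" where
  "in_H01 u \<longleftrightarrow> (\<exists>g. H01_with_deriv u g)"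

definition interior_subsonic_solution ::
  "real \<Rightarrow> (real \<Rightarrow> real) \<Rightarrow> (real \<Rightarrow> real) \<Rightarrow> (real \<Rightarrow> real) \<Rightarrow> bool" where
  "interior_subsonic_solution \<alpha> b n E \<longleftrightarrow>
     in_H01 (\<lambda>x. (n x - 1)\<^sup>2) \<and>
     (\<forall>x\<in>{0<..<1}. n x > 1) \<and> n 0 = 1 \<and> n 1 = 1 \<and>
     (\<exists>nx. (\<forall>x y. 0 < x \<and> x \<le> y \<and> y < 1 \<longrightarrow>
               integrable (lebesgue_on {x..y}) nx \<and>
               n y - n x = integral\<^sup>L (lebesgue_on {x..y}) nx) \<and>
           (\<forall>\<phi> \<phi>x. H01_with_deriv \<phi> \<phi>x \<longrightarrow>
               integral\<^sup>L (lebesgue_on {0..1}) (\<lambda>x. (1 / n x - 1 / (n x)^3) * nx x * \<phi>x x)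
             + \<alpha> * integral\<^sup>L (lebesgue_on {0..1}) (\<lambda>x. \<phi>x x / n x)
             + integral\<^sup>L (lebesgue_on {0..1}) (\<lambda>x. (n x - b x) * \<phi> x) = 0)) \<and>
     (\<forall>x\<in>{0..1}. E x = \<alpha> + integral\<^sup>L (lebesgue_on {0..x}) (\<lambda>y. n y - b y))"

end

theory Submission
  imports Defs
begin


lemma integrable_on_iff_abs:
  fixes f :: "real \<Rightarrow> real"
  assumes "S \<in> sets lebesgue"
  shows "integrable (lebesgue_on S) f \<longleftrightarrow> f absolutely_integrable_on S"
  using assms by (simp add: set_integrable_def integrable_restrict_space)

lemma LINT_eq_HK:
  fixes f :: "real \<Rightarrow> real"
  assumes "f absolutely_integrable_on {a..b}"
  shows "integrable (lebesgue_on {a..b}) f" "integral\<^sup>L (lebesgue_on {a..b}) f = integral {a..b} f"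
  using assms integrable_on_iff_abs[of "{a..b}" f] lebesgue_integral_eq_integral[of "{a..b}" f] by auto

lemma indicator_abs_int:
  fixes s t a b :: real
  shows "(\<lambda>x. indicator {s..t} x :: real) absolutely_integrable_on {a..b}"
proof -
  have "(\<lambda>x. if x \<in> {s..t} then (1::real) else 0) absolutely_integrable_on {a..b}"
  proof (rule absolutely_integrable_integrable_bound[where g="\<lambda>_. 1"])
    show "(\<lambda>x. if x \<in> {s..t} then (1::real) else 0) integrable_on {a..b}"
      proof (subst integrable_restrict_Int)
      have "{s..t} \<inter> {a..b} = {max s a..min t b}" by (auto simp: max_def min_def)
      then show "(\<lambda>x. 1::real) integrable_on {s..t} \<inter> {a..b}" by (simp add: integrable_const_ivl)
    qed
  qed auto
  then show ?thesis by (simp add: indicator_def of_bool_def)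
qed

lemma integral_indicator_ivl:
  assumes "0 \<le> s" "0 \<le> x"
  shows "integral {0..x} (\<lambda>y. indicator {s..s+h} y :: real) = max 0 (min (s+h) x - s)"
proof -
  have "integral {0..x} (\<lambda>y. indicator {s..s+h} y :: real)
      = integral {0..x} (\<lambda>y. if y \<in> {s..s+h} then (1::real) else 0)"
    by (simp add: indicator_def of_bool_def)
  also have "\<dots> = integral ({s..s+h} \<inter> {0..x}) (\<lambda>_. (1::real))"
    by (rule integral_restrict_Int)
  also have "{s..s+h} \<inter> {0..x} = {s..min (s+h) x}" using assms by auto
  also have "integral {s..min (s+h) x} (\<lambda>_. (1::real)) = max 0 (min (s+h) x - s)"
    by auto
  finally show ?thesis .
qed

lemma Psi_deriv:
  fixes g :: "real \<Rightarrow> real"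
  assumes g: "continuous_on {0..1} g"
  defines "\<Psi> \<equiv> \<lambda>x. integral {x..1} g"
  shows "continuous_on {0..1} \<Psi>" "\<And>x. x \<in> {0<..<1} \<Longrightarrow> (\<Psi> has_real_derivative (- g x)) (at x)"
    "\<Psi> 1 = 0"
proof -
  have eq: "\<Psi> x = integral {0..1} g - integral {0..x} g" if "x \<in> {0..1}" for x
  proof -
    have c: "integral {0..x} g + integral {x..1} g = integral {0..1} g"
      by (rule Henstock_Kurzweil_Integration.integral_combine) (use that integrable_continuous_real[OF g] in auto)
    from c show ?thesis unfolding \<Psi>_def by linarith
  qed
  show "continuous_on {0..1} \<Psi>"
  proof (rule continuous_on_eq[OF _ eq[symmetric]])
    show "continuous_on {0..1} (\<lambda>x. integral {0..1} g - integral {0..x} g)"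
      by (intro continuous_on_diff continuous_on_const indefinite_integral_continuous_1 integrable_continuous_real g)
  qed
  show "\<Psi> 1 = 0" by (simp add: \<Psi>_def)
  fix x :: real assume x: "x \<in> {0<..<1}"
  have "((\<lambda>u. integral {0..u} g) has_vector_derivative g x) (at x within {0..1})"
    by (rule integral_has_vector_derivative[OF g]) (use x in auto)
  then have d: "((\<lambda>u. integral {0..u} g) has_vector_derivative g x) (at x)"
  proof -
    assume a: "((\<lambda>u. integral {0..u} g) has_vector_derivative g x) (at x within {0..1})"
    have "((\<lambda>u. integral {0..u} g) has_vector_derivative g x) (at x within {0<..<1})"
      by (rule has_vector_derivative_within_subset[OF a]) auto
    moreover have "at x within {0<..<1} = at x" by (rule at_within_open) (use x in auto)
    ultimately show ?thesis by simp
  qed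
  have "((\<lambda>u. integral {0..1} g - integral {0..u} g) has_real_derivative (0 - g x)) (at x)"
    by (intro derivative_intros d[unfolded has_real_derivative_iff_has_vector_derivative[symmetric]])
  then have "((\<lambda>u. integral {0..1} g - integral {0..u} g) has_real_derivative (- g x)) (at x)" by simp
  then show "(\<Psi> has_real_derivative (- g x)) (at x)"
    by (rule has_field_derivative_transform_within_open[where S="{0<..<1}"])
       (use x eq in auto)
qed




lemma ibp_step:
  fixes g :: "real \<Rightarrow> real"
  assumes g: "continuous_on {0..1} g" and s: "0 \<le> s" "0 < h" "s + h \<le> 1"
  defines "\<Psi> \<equiv> \<lambda>x. integral {x..1} g"
  defines "L \<equiv> \<lambda>x::real. max 0 (min (s+h) x - s)"
  shows "integral {0..1} (\<lambda>x. g x * L x) = integral {s..s+h} \<Psi>"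
proof -
  note P = Psi_deriv[OF g, folded \<Psi>_def]
  let ?g' = "\<lambda>x::real. if x \<in> {s..s+h} then 1 else (0::real)"
  have "((\<lambda>x. (- g x) * L x) has_integral (- integral {s..s+h} \<Psi>)) {0..1}"
  proof (rule integration_by_parts_interior_strong[where prod="(*)" and s="{s,s+h}" and f=\<Psi> and g=L and g'="?g'"])
    show "bounded_bilinear ((*) :: real \<Rightarrow> real \<Rightarrow> real)" by (rule bounded_bilinear_mult)
    show "continuous_on {0..1} \<Psi>" by (rule P(1))
    show "continuous_on {0..1} L" unfolding L_def by (intro continuous_intros)
    show "(\<Psi> has_vector_derivative - g x) (at x)" if "x \<in> {0<..<1} - {s, s + h}" for x
      using P(2)[of x] that by (simp add: has_real_derivative_iff_has_vector_derivative)
    show "(L has_vector_derivative ?g' x) (at x)" if x: "x \<in> {0<..<1} - {s, s + h}" for x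
    proof -
      consider "x < s" | "s < x \<and> x < s + h" | "s + h < x" using x by force
      then show ?thesis
      proof cases
        case 1
        have "((\<lambda>_. 0::real) has_real_derivative 0) (at x)" by (rule DERIV_const)
        then have "(L has_real_derivative 0) (at x)"
          by (rule has_field_derivative_transform_within_open[where S="{..<s}"])
             (use 1 s in \<open>auto simp: L_def\<close>)
        then show ?thesis using 1 by (simp add: has_real_derivative_iff_has_vector_derivative)
      next
        case 2
        have "((\<lambda>y. y - s) has_real_derivative 1) (at x)" by (auto intro!: derivative_eq_intros)
        then have "(L has_real_derivative 1) (at x)"
          by (rule has_field_derivative_transform_within_open[where S="{s<..<s+h}"])
             (use 2 s in \<open>auto simp: L_def\<close>)
        then show ?thesis using 2 by (simp add: has_real_derivative_iff_has_vector_derivative)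
      next
        case 3
        have "((\<lambda>_. h) has_real_derivative 0) (at x)" by (rule DERIV_const)
        then have "(L has_real_derivative 0) (at x)"
          by (rule has_field_derivative_transform_within_open[where S="{s+h<..}"])
             (use 3 s in \<open>auto simp: L_def\<close>)
        then show ?thesis using 3 by (simp add: has_real_derivative_iff_has_vector_derivative)
      qed
    qed
    have "(\<Psi> has_integral integral {s..s+h} \<Psi>) ({s..s+h} \<inter> {0..1})"
    proof -
      have "{s..s+h} \<inter> {0..1} = {s..s+h}" using s by auto
      moreover have "\<Psi> integrable_on {s..s+h}"
        by (rule integrable_continuous_real, rule continuous_on_subset[OF P(1)]) (use s in auto)
      ultimately show ?thesis by (metis integrable_integral)
    qed
    then have "((\<lambda>x. if x \<in> {s..s+h} then \<Psi> x else 0) has_integral integral {s..s+h} \<Psi>) {0..1}"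
      by (subst has_integral_restrict_Int)
    moreover have "\<Psi> 1 * L 1 - \<Psi> 0 * L 0 - - integral {s..s+h} \<Psi> = integral {s..s+h} \<Psi>"
    proof -
      have "\<Psi> 1 = 0" unfolding \<Psi>_def by simp
      moreover have "L 0 = 0" using s by (simp add: L_def)
      ultimately show ?thesis by (simp only: mult_zero_left mult_zero_right diff_zero minus_minus)
    qed
    ultimately show "((\<lambda>x. \<Psi> x * ?g' x) has_integral (\<Psi> 1 * L 1 - \<Psi> 0 * L 0 - - integral {s..s+h} \<Psi>)) {0..1}"
      by (simp add: if_distrib cong: if_cong)
  qed (use s in auto)
  from has_integral_neg[OF this]
  have "((\<lambda>x. g x * L x) has_integral integral {s..s+h} \<Psi>) {0..1}"
    by simp
  then show ?thesis by (rule integral_unique)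
qed




lemma restrict_piece:
  fixes F :: "real \<Rightarrow> real"
  assumes "F absolutely_integrable_on {s..t}" "0 \<le> s" "t \<le> 1"
  shows "(\<lambda>x. indicator {s..t} x * F x) absolutely_integrable_on {0..1}"
    "integral {0..1} (\<lambda>x. indicator {s..t} x * F x) = integral {s..t} F"
proof -
  have e: "(\<lambda>x. indicator {s..t} x * F x) = (\<lambda>x. if x \<in> {s..t} then F x else 0)"
    by (auto simp: indicator_def)
  have "(\<lambda>x. if x \<in> {s..t} then F x else 0) absolutely_integrable_on UNIV"
    using assms(1) absolutely_integrable_restrict_UNIV by blast
  then show "(\<lambda>x. indicator {s..t} x * F x) absolutely_integrable_on {0..1}"
    unfolding e by (rule absolutely_integrable_on_subinterval) auto
  have st: "{s..t} \<inter> {0..1} = {s..t}" using assms by auto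
  show "integral {0..1} (\<lambda>x. indicator {s..t} x * F x) = integral {s..t} F"
    unfolding e integral_restrict_Int st by (rule refl)
qed

lemma cont_abs_int:
  fixes F :: "real \<Rightarrow> real"
  assumes "continuous_on {0..1} F" "0 \<le> s" "t \<le> 1"
  shows "F absolutely_integrable_on {s..t}"
  by (rule absolutely_integrable_continuous_real, rule continuous_on_subset[OF assms(1)]) (use assms in auto)

lemma two_piece:
  fixes F :: "real \<Rightarrow> real"
  assumes "F absolutely_integrable_on {s..s+h}" "F absolutely_integrable_on {t..t+h}"
    "0 \<le> s" "s + h \<le> 1" "0 \<le> t" "t + h \<le> 1"
  shows "integral\<^sup>L (lebesgue_on {0..1}) (\<lambda>x. indicator {s..s+h} x * F x / h - indicator {t..t+h} x * F x / h)
     = (integral {s..s+h} F - integral {t..t+h} F) / h"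
proof -
  note A = restrict_piece[OF assms(1,3,4)] restrict_piece[OF assms(2,5,6)]
  have ai: "(\<lambda>x. indicator {s..s+h} x * F x / h - indicator {t..t+h} x * F x / h) absolutely_integrable_on {0..1}"
    using A by (intro set_integral_diff(1) set_integrable_divide) auto
  have "integral\<^sup>L (lebesgue_on {0..1}) (\<lambda>x. indicator {s..s+h} x * F x / h - indicator {t..t+h} x * F x / h)
     = integral {0..1} (\<lambda>x. indicator {s..s+h} x * F x / h - indicator {t..t+h} x * F x / h)"
    by (rule LINT_eq_HK(2)[OF ai])
  also have "\<dots> = integral {0..1} (\<lambda>x. indicator {s..s+h} x * F x) / h - integral {0..1} (\<lambda>x. indicator {t..t+h} x * F x) / h"
    using A by (subst integral_diff) (auto intro!: integrable_on_divide dest: set_lebesgue_integral_eq_integral(1))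
  also have "\<dots> = (integral {s..s+h} F - integral {t..t+h} F) / h"
    using A by (simp add: diff_divide_distrib)
  finally show ?thesis .
qed

lemma aux_div:
  fixes a b c h \<alpha> :: real
  assumes "a / h + \<alpha> * (b / h) + c / h = 0" "0 < h"
  shows "a + \<alpha> * b + c = 0"
proof -
  have "a + \<alpha> * b + c = h * (a / h + \<alpha> * (b / h) + c / h)"
    using assms(2) by (simp add: field_simps)
  then show ?thesis using assms(1) by simp
qed

lemma weak_K:
  fixes \<alpha> :: real and n b nx :: "real \<Rightarrow> real"
  assumes b: "continuous_on {0..1} b" and ncont: "continuous_on {0..1} n"
    and npos: "\<forall>x\<in>{0..1}. 1 \<le> n x"
    and nx: "\<forall>x y. 0 < x \<and> x \<le> y \<and> y < 1 \<longrightarrow>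
               integrable (lebesgue_on {x..y}) nx \<and>
               n y - n x = integral\<^sup>L (lebesgue_on {x..y}) nx"
    and weak: "\<forall>\<phi> \<phi>x. H01_with_deriv \<phi> \<phi>x \<longrightarrow>
               integral\<^sup>L (lebesgue_on {0..1}) (\<lambda>x. (1 / n x - 1 / (n x)^3) * nx x * \<phi>x x)
             + \<alpha> * integral\<^sup>L (lebesgue_on {0..1}) (\<lambda>x. \<phi>x x / n x)
             + integral\<^sup>L (lebesgue_on {0..1}) (\<lambda>x. (n x - b x) * \<phi> x) = 0"
    and st: "0 < s" "0 < t" "0 < h" "s + h < 1" "t + h < 1"
  defines "\<Psi> \<equiv> \<lambda>x. integral {x..1} (\<lambda>y. n y - b y)"
  defines "K \<equiv> \<lambda>x. (1 / n x - 1 / (n x)^3) * nx x + \<alpha> / n x + \<Psi> x"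
  shows "integral {s..s+h} K = integral {t..t+h} K"
proof -
  define S where "S = {s..s+h}"
  define T where "T = {t..t+h}"
  define \<phi>x where "\<phi>x = (\<lambda>x. indicator S x / h - indicator T x / h :: real)"
  define \<phi> where "\<phi> = (\<lambda>x. integral\<^sup>L (lebesgue_on {0..x}) \<phi>x)"
  define Ls where "Ls = (\<lambda>x::real. max 0 (min (s+h) x - s))"
  define Lt where "Lt = (\<lambda>x::real. max 0 (min (t+h) x - t))"
  have gc: "continuous_on {0..1} (\<lambda>y. n y - b y)" by (intro continuous_intros ncont b)
  note P = Psi_deriv[OF gc, folded \<Psi>_def]
  have phix_ai: "\<phi>x absolutely_integrable_on {a..c}" for a c
    unfolding \<phi>x_def S_def T_def
    by (intro set_integral_diff(1) set_integrable_divide indicator_abs_int)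
  have phi_eq: "\<phi> x = (Ls x - Lt x) / h" if "x \<in> {0..1}" for x
  proof -
    have "\<phi> x = integral {0..x} \<phi>x" unfolding \<phi>_def by (rule LINT_eq_HK(2)[OF phix_ai])
    also have "\<dots> = integral {0..x} (\<lambda>y. indicator S y :: real) / h - integral {0..x} (\<lambda>y. indicator T y :: real) / h"
      unfolding \<phi>x_def
      by (subst integral_diff)
         (auto intro!: integrable_on_divide intro: set_lebesgue_integral_eq_integral(1) indicator_abs_int simp: S_def T_def)
    also have "\<dots> = (Ls x - Lt x) / h"
      unfolding S_def T_def Ls_def Lt_def using that st
      by (simp add: integral_indicator_ivl diff_divide_distrib)
    finally show ?thesis .
  qed
  have H: "H01_with_deriv \<phi> \<phi>x"
    unfolding H01_with_deriv_def
  proof (intro conjI)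
    show "\<phi>x \<in> borel_measurable (lebesgue_on {0..1})"
      using LINT_eq_HK(1)[OF phix_ai] by (rule borel_measurable_integrable)
    have "bounded (\<phi>x ` {0..1})"
      unfolding bounded_iff \<phi>x_def
      by (rule exI[where x="2/h"]) (use st in \<open>auto simp: indicator_def intro!: divide_right_mono\<close>)
    then have "(\<lambda>x. \<phi>x x * \<phi>x x) absolutely_integrable_on {0..1}"
      using absolutely_integrable_bounded_measurable_product_real[OF _ _ _ phix_ai]
        LINT_eq_HK(1)[OF phix_ai] borel_measurable_integrable by auto
    then show "integrable (lebesgue_on {0..1}) (\<lambda>x. (\<phi>x x)\<^sup>2)"
      using LINT_eq_HK(1) by (simp add: power2_eq_square)
    show "\<forall>x\<in>{0..1}. \<phi> x = integral\<^sup>L (lebesgue_on {0..x}) \<phi>x" by (simp add: \<phi>_def)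
    show "\<phi> 0 = 0" using phi_eq[of 0] st by (simp add: Ls_def Lt_def)
    show "\<phi> 1 = 0" using phi_eq[of 1] st by (simp add: Ls_def Lt_def)
  qed
  from weak H have W:
    "integral\<^sup>L (lebesgue_on {0..1}) (\<lambda>x. (1 / n x - 1 / (n x)^3) * nx x * \<phi>x x)
     + \<alpha> * integral\<^sup>L (lebesgue_on {0..1}) (\<lambda>x. \<phi>x x / n x)
     + integral\<^sup>L (lebesgue_on {0..1}) (\<lambda>x. (n x - b x) * \<phi> x) = 0" by blast
  have Acont: "continuous_on {0..1} (\<lambda>x. 1 / n x - 1 / (n x)^3)"
    using npos by (intro continuous_intros ncont) auto
  have ninv: "continuous_on {0..1} (\<lambda>x. 1 / n x)"
    using npos by (intro continuous_intros ncont) auto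
  have Fai: "(\<lambda>x. (1 / n x - 1 / (n x)^3) * nx x) absolutely_integrable_on {a..c}"
    if "0 < a" "a \<le> c" "c < 1" for a c
  proof (rule absolutely_integrable_bounded_measurable_product_real)
    have co: "continuous_on {a..c} (\<lambda>x. 1 / n x - 1 / (n x)^3)"
      by (rule continuous_on_subset[OF Acont]) (use that in auto)
    show "(\<lambda>x. 1 / n x - 1 / (n x)^3) \<in> borel_measurable (lebesgue_on {a..c})"
      by (rule continuous_imp_measurable_on_sets_lebesgue[OF co]) auto
    show "bounded ((\<lambda>x. 1 / n x - 1 / (n x)^3) ` {a..c})"
      by (rule compact_imp_bounded, rule compact_continuous_image[OF co]) auto
    show "nx absolutely_integrable_on {a..c}"
      using nx that integrable_on_iff_abs[of "{a..c}" nx] by auto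
  qed auto
  have I1: "integral\<^sup>L (lebesgue_on {0..1}) (\<lambda>x. (1 / n x - 1 / (n x)^3) * nx x * \<phi>x x)
     = (integral S (\<lambda>x. (1 / n x - 1 / (n x)^3) * nx x) - integral T (\<lambda>x. (1 / n x - 1 / (n x)^3) * nx x)) / h"
  proof -
    have "(\<lambda>x. (1 / n x - 1 / (n x)^3) * nx x * \<phi>x x) = (\<lambda>x. indicator {s..s+h} x * ((1 / n x - 1 / (n x)^3) * nx x) / h
       - indicator {t..t+h} x * ((1 / n x - 1 / (n x)^3) * nx x) / h)"
      by (auto simp: \<phi>x_def S_def T_def algebra_simps diff_divide_distrib)
    then show ?thesis unfolding S_def T_def using st
      by (simp only:) (rule two_piece; (intro Fai)?; simp)
  qed
  have I2: "integral\<^sup>L (lebesgue_on {0..1}) (\<lambda>x. \<phi>x x / n x)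
     = (integral S (\<lambda>x. 1 / n x) - integral T (\<lambda>x. 1 / n x)) / h"
  proof -
    have "(\<lambda>x. \<phi>x x / n x) = (\<lambda>x. indicator {s..s+h} x * (1 / n x) / h
       - indicator {t..t+h} x * (1 / n x) / h)"
      by (auto simp: \<phi>x_def S_def T_def algebra_simps diff_divide_distrib)
    then show ?thesis unfolding S_def T_def using st
      by (simp only:) (rule two_piece; (intro cont_abs_int ninv)?; simp)
  qed
  have I3: "integral\<^sup>L (lebesgue_on {0..1}) (\<lambda>x. (n x - b x) * \<phi> x)
     = (integral S \<Psi> - integral T \<Psi>) / h"
  proof -
    have "integral\<^sup>L (lebesgue_on {0..1}) (\<lambda>x. (n x - b x) * \<phi> x)
       = integral\<^sup>L (lebesgue_on {0..1}) (\<lambda>x. ((n x - b x) * Ls x) / h - ((n x - b x) * Lt x) / h)"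
      by (rule Bochner_Integration.integral_cong) (auto simp: phi_eq algebra_simps diff_divide_distrib)
    also have "\<dots> = integral {0..1} (\<lambda>x. ((n x - b x) * Ls x) / h - ((n x - b x) * Lt x) / h)"
      by (rule LINT_eq_HK(2), rule absolutely_integrable_continuous_real)
         (unfold Ls_def Lt_def, intro continuous_intros ncont b, use st in auto)
    also have "\<dots> = integral {0..1} (\<lambda>x. (n x - b x) * Ls x) / h - integral {0..1} (\<lambda>x. (n x - b x) * Lt x) / h"
      by (subst integral_diff)
         (use st in \<open>auto intro!: integrable_on_divide integrable_continuous_real continuous_intros ncont b simp: Ls_def Lt_def\<close>)
    also have "\<dots> = (integral S \<Psi> - integral T \<Psi>) / h"
      unfolding Ls_def Lt_def S_def T_def \<Psi>_def
      using ibp_step[OF gc, of s h] ibp_step[OF gc, of t h] st by (simp add: diff_divide_distrib)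
    finally show ?thesis .
  qed
  have KS: "integral {u..u+h} K = integral {u..u+h} (\<lambda>x. (1 / n x - 1 / (n x)^3) * nx x)
      + \<alpha> * integral {u..u+h} (\<lambda>x. 1 / n x) + integral {u..u+h} \<Psi>" if u: "0 < u" "u + h < 1" for u
  proof -
    have i1: "(\<lambda>x. (1 / n x - 1 / (n x)^3) * nx x) integrable_on {u..u+h}"
      using Fai[of u "u+h"] u st by (auto dest: set_lebesgue_integral_eq_integral(1))
    have i2: "(\<lambda>x. \<alpha> * (1 / n x)) integrable_on {u..u+h}"
      by (rule integrable_continuous_real, rule continuous_on_subset[of "{0..1}"])
         (use u st npos in \<open>auto intro!: continuous_intros ncont\<close>)
    have i3: "\<Psi> integrable_on {u..u+h}"
      by (rule integrable_continuous_real, rule continuous_on_subset[OF P(1)]) (use u st in auto)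
    have "integral {u..u+h} K = integral {u..u+h} (\<lambda>x. (1 / n x - 1 / (n x)^3) * nx x + \<alpha> * (1 / n x) + \<Psi> x)"
      unfolding K_def by simp
    also have "\<dots> = integral {u..u+h} (\<lambda>x. (1 / n x - 1 / (n x)^3) * nx x + \<alpha> * (1 / n x)) + integral {u..u+h} \<Psi>"
      by (rule integral_add[OF integrable_add[OF i1 i2] i3])
    also have "integral {u..u+h} (\<lambda>x. (1 / n x - 1 / (n x)^3) * nx x + \<alpha> * (1 / n x))
       = integral {u..u+h} (\<lambda>x. (1 / n x - 1 / (n x)^3) * nx x) + integral {u..u+h} (\<lambda>x. \<alpha> * (1 / n x))"
      by (rule integral_add[OF i1 i2])
    finally show ?thesis by (simp only: integral_mult_right)
  qed
  have "(integral S (\<lambda>x. (1 / n x - 1 / (n x)^3) * nx x) - integral T (\<lambda>x. (1 / n x - 1 / (n x)^3) * nx x)) / h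
     + \<alpha> * ((integral S (\<lambda>x. 1 / n x) - integral T (\<lambda>x. 1 / n x)) / h)
     + (integral S \<Psi> - integral T \<Psi>) / h = 0"
    using W unfolding I1 I2 I3 .
  then have "(integral S (\<lambda>x. (1 / n x - 1 / (n x)^3) * nx x) - integral T (\<lambda>x. (1 / n x - 1 / (n x)^3) * nx x))
     + \<alpha> * ((integral S (\<lambda>x. 1 / n x) - integral T (\<lambda>x. 1 / n x)))
     + (integral S \<Psi> - integral T \<Psi>) = 0"
    by (rule aux_div[OF _ st(3)])
  then show ?thesis
    using KS[of s] KS[of t] st unfolding S_def T_def by (simp add: algebra_simps)
qed



lemma LD_right:
  fixes f :: "real \<Rightarrow> real"
  assumes f: "f integrable_on {a..b}"
  obtains N where "negligible N"
    "\<And>x. x \<in> {a<..<b} - N \<Longrightarrow> ((\<lambda>h. integral {x..x+h} f / h) \<longlongrightarrow> f x) (at_right 0)"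
proof -
  define f' where "f' = (\<lambda>x. if x \<in> {a..b} then f x else 0)"
  have "f' integrable_on cbox c d" for c d :: real
  proof -
    have "f integrable_on {max a c..min b d}"
      by (rule integrable_on_subinterval[OF f]) auto
    moreover have "{a..b} \<inter> cbox c d = {max a c..min b d}" by (auto simp: max_def min_def)
    ultimately show ?thesis unfolding f'_def by (simp only: integrable_restrict_Int)
  qed
  then obtain N where N: "negligible N"
    "\<And>x e. \<lbrakk>x \<notin> N; 0 < e\<rbrakk> \<Longrightarrow>
        \<exists>d>0. \<forall>h. 0 < h \<and> h < d \<longrightarrow>
          norm(integral (cbox x (x + h *\<^sub>R One)) f' /\<^sub>R h ^ DIM(real) - f' x) < e"
    using integrable_ccontinuous_explicit[of f'] by blast
  show ?thesis
  proof (rule that[OF N(1)])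
    fix x assume x: "x \<in> {a<..<b} - N"
    show "((\<lambda>h. integral {x..x+h} f / h) \<longlongrightarrow> f x) (at_right 0)"
      unfolding tendsto_iff
    proof (intro allI impI)
      fix e :: real assume e: "0 < e"
      obtain d where d: "d > 0" "\<And>h. 0 < h \<Longrightarrow> h < d \<Longrightarrow>
          norm(integral (cbox x (x + h *\<^sub>R One)) f' /\<^sub>R h ^ DIM(real) - f' x) < e"
        using N(2)[of x e] x e by blast
      show "\<forall>\<^sub>F h in at_right 0. dist (integral {x..x + h} f / h) (f x) < e"
        unfolding eventually_at_right_field
      proof (intro exI[where x="min d (b - x)"] conjI allI impI)
        show "0 < min d (b - x)" using d x by auto
        fix h :: real assume h: "0 < h" "h < min d (b - x)"
        have "integral {x..x+h} f' = integral {x..x+h} f"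
        proof -
          have "{a..b} \<inter> {x..x+h} = {x..x+h}" using x h by auto
          then show ?thesis unfolding f'_def integral_restrict_Int by (rule arg_cong)
        qed
        moreover have "f' x = f x" using x by (simp add: f'_def)
        ultimately show "dist (integral {x..x + h} f / h) (f x) < e"
          using d(2)[of h] h by (simp add: dist_norm divide_inverse mult.commute)
      qed
    qed
  qed
qed

lemma K_const:
  fixes K :: "real \<Rightarrow> real"
  assumes Kint: "\<And>x y. 0 < x \<Longrightarrow> y < 1 \<Longrightarrow> K integrable_on {x..y}"
    and Keq: "\<And>s t h. 0 < s \<Longrightarrow> 0 < t \<Longrightarrow> 0 < h \<Longrightarrow> s + h < 1 \<Longrightarrow> t + h < 1 \<Longrightarrow>
                integral {s..s+h} K = integral {t..t+h} K"
  obtains c where "\<And>x y. 0 < x \<Longrightarrow> y < 1 \<Longrightarrow> \<exists>N. negligible N \<and> (\<forall>z\<in>{x..y}-N. K z = c)"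
proof -
  obtain N0 where N0: "negligible N0"
    "\<And>x. x \<in> {1/4<..<3/4} - N0 \<Longrightarrow> ((\<lambda>h. integral {x..x+h} K / h) \<longlongrightarrow> K x) (at_right 0)"
    using LD_right[OF Kint[of "1/4" "3/4"]] by auto
  have "\<not> {1/4<..<3/4::real} \<subseteq> N0"
  proof
    assume "{1/4<..<3/4::real} \<subseteq> N0"
    then have "negligible {1/4<..<3/4::real}" using N0(1) negligible_subset by blast
    then show False using negligible_interval(2)[of "1/4::real" "3/4"] by simp
  qed
  then obtain x0 where x0: "x0 \<in> {1/4<..<3/4} - N0" by blast
  note L0 = N0(2)[OF x0]
  show ?thesis
  proof (rule that[of "K x0"])
    fix x y :: real assume xy: "0 < x" "y < 1"
    obtain N1 where N1: "negligible N1"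
      "\<And>z. z \<in> {x<..<y} - N1 \<Longrightarrow> ((\<lambda>h. integral {z..z+h} K / h) \<longlongrightarrow> K z) (at_right 0)"
      using LD_right[OF Kint[OF xy]] by auto
    have "\<forall>z\<in>{x..y} - (N1 \<union> {x,y}). K z = K x0"
    proof
      fix z assume z: "z \<in> {x..y} - (N1 \<union> {x,y})"
      have zz: "z \<in> {x<..<y} - N1" using z by auto
      have ev: "\<forall>\<^sub>F h in at_right 0. integral {z..z+h} K / h = integral {x0..x0+h} K / h"
        unfolding eventually_at_right_field
      proof (intro exI[where x="min (1 - z) (1 - x0)"] conjI allI impI)
        show "0 < min (1 - z) (1 - x0)" using zz xy x0 by auto
        fix h :: real assume h: "0 < h" "h < min (1 - z) (1 - x0)"
        show "integral {z..z+h} K / h = integral {x0..x0+h} K / h"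
          using Keq[of z x0 h] h zz xy x0 by auto
      qed
      have "((\<lambda>h. integral {x0..x0+h} K / h) \<longlongrightarrow> K z) (at_right 0)"
        by (rule Lim_transform_eventually[OF N1(2)[OF zz] ev])
      then show "K z = K x0"
        using L0 tendsto_unique[OF trivial_limit_at_right_real] by blast
    qed
    moreover have "negligible (N1 \<union> {x,y})" using N1(1) by auto
    ultimately show "\<exists>N. negligible N \<and> (\<forall>z\<in>{x..y}-N. K z = K x0)" by blast
  qed
qed



lemma abs_le_1_sq: "\<bar>g::real\<bar> \<le> 1 + g\<^sup>2"
proof (cases "\<bar>g\<bar> \<le> 1")
  case True then show ?thesis by (simp add: add_increasing2)
next
  case False
  have "1 * \<bar>g\<bar> \<le> \<bar>g\<bar> * \<bar>g\<bar>" by (rule mult_right_mono) (use False in auto)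
  then have "\<bar>g\<bar> \<le> \<bar>g\<bar> * \<bar>g\<bar>" by simp
  also have "\<dots> = g\<^sup>2" by (simp add: power2_eq_square abs_mult_self_eq)
  finally show ?thesis by simp
qed

lemma sol_basic:
  assumes "interior_subsonic_solution \<alpha> b n E"
  shows "continuous_on {0..1} n" "\<forall>x\<in>{0..1}. 1 \<le> n x"
proof -
  from assms obtain g0 where H: "H01_with_deriv (\<lambda>x. (n x - 1)\<^sup>2) g0"
    and gt: "\<forall>x\<in>{0<..<1}. n x > 1" and n0: "n 0 = 1" and n1: "n 1 = 1"
    unfolding interior_subsonic_solution_def in_H01_def by blast
  from H have gm: "g0 \<in> borel_measurable (lebesgue_on {0..1})"
    and g2: "integrable (lebesgue_on {0..1}) (\<lambda>x. (g0 x)\<^sup>2)"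
    and u: "\<forall>x\<in>{0..1}. (n x - 1)\<^sup>2 = integral\<^sup>L (lebesgue_on {0..x}) g0"
    unfolding H01_with_deriv_def by auto
  have one: "integrable (lebesgue_on {0..1}) (\<lambda>x::real. 1::real)"
    by (rule LINT_eq_HK(1)) simp
  have "integrable (lebesgue_on {0..1}) g0"
  proof (rule Bochner_Integration.integrable_bound[OF Bochner_Integration.integrable_add[OF one g2] gm])
    show "AE x in lebesgue_on {0..1}. norm (g0 x) \<le> norm (1 + (g0 x)\<^sup>2)"
      using abs_le_1_sq by (auto intro!: AE_I2)
  qed
  then have gai: "g0 absolutely_integrable_on {0..1}"
    using integrable_on_iff_abs by auto
  then have gi: "g0 integrable_on {0..1}" using set_lebesgue_integral_eq_integral(1) by blast
  have ueq: "(n x - 1)\<^sup>2 = integral {0..x} g0" if "x \<in> {0..1}" for x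
  proof -
    have "g0 absolutely_integrable_on {0..x}"
      by (rule absolutely_integrable_on_subinterval[OF gai]) (use that in auto)
    then show ?thesis using u that LINT_eq_HK(2) by auto
  qed
  show ge: "\<forall>x\<in>{0..1}. 1 \<le> n x"
  proof
    fix x :: real assume "x \<in> {0..1}"
    then consider "x = 0" | "x = 1" | "x \<in> {0<..<1}" by fastforce
    then show "1 \<le> n x" using gt n0 n1 by cases fastforce+
  qed
  have "continuous_on {0..1} (\<lambda>x. 1 + sqrt (integral {0..x} g0))"
    by (intro continuous_intros indefinite_integral_continuous_1 gi)
  moreover have "1 + sqrt (integral {0..x} g0) = n x" if "x \<in> {0..1}" for x
  proof -
    have "sqrt (integral {0..x} g0) = sqrt ((n x - 1)\<^sup>2)" using ueq[OF that] by simp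
    also have "\<dots> = n x - 1" using ge that by simp
    finally show ?thesis by simp
  qed
  ultimately show "continuous_on {0..1} n" by (rule continuous_on_eq)
qed


lemma A_pos: "1 < (m::real) \<Longrightarrow> 0 < 1 / m - 1 / m ^ 3"
proof -
  assume m: "1 < m"
  have "1 / m ^ 3 < 1 / m"
  proof (rule divide_strict_left_mono)
    have "m * 1 < m * m ^ 2" using m by (intro mult_strict_left_mono) (auto simp: power2_eq_square less_1_mult)
    then show "m < m ^ 3" by (simp add: power3_eq_cube power2_eq_square)
  qed (use m in auto)
  then show ?thesis by simp
qed

lemma sol_deriv:
  fixes \<alpha> :: real and b n E :: "real \<Rightarrow> real"
  assumes b: "continuous_on {0..1} b" and sol: "interior_subsonic_solution \<alpha> b n E"
  shows "\<exists>c. \<forall>x\<in>{0<..<1}. (n has_real_derivative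
      ((c - \<alpha> / n x - integral {x..1} (\<lambda>y. n y - b y)) / (1 / n x - 1 / (n x)^3))) (at x)"
proof -
  note nc = sol_basic(1)[OF sol] and npos = sol_basic(2)[OF sol]
  from sol obtain nx where
    gt: "\<forall>x\<in>{0<..<1}. n x > 1" and
    nx: "\<forall>x y. 0 < x \<and> x \<le> y \<and> y < 1 \<longrightarrow>
               integrable (lebesgue_on {x..y}) nx \<and>
               n y - n x = integral\<^sup>L (lebesgue_on {x..y}) nx" and
    weak: "\<forall>\<phi> \<phi>x. H01_with_deriv \<phi> \<phi>x \<longrightarrow>
               integral\<^sup>L (lebesgue_on {0..1}) (\<lambda>x. (1 / n x - 1 / (n x)^3) * nx x * \<phi>x x)
             + \<alpha> * integral\<^sup>L (lebesgue_on {0..1}) (\<lambda>x. \<phi>x x / n x)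
             + integral\<^sup>L (lebesgue_on {0..1}) (\<lambda>x. (n x - b x) * \<phi> x) = 0"
    unfolding interior_subsonic_solution_def by blast
  define \<Psi> where "\<Psi> = (\<lambda>x. integral {x..1} (\<lambda>y. n y - b y))"
  define K where "K = (\<lambda>x. (1 / n x - 1 / (n x)^3) * nx x + \<alpha> / n x + \<Psi> x)"
  define A where "A = (\<lambda>x. 1 / n x - 1 / (n x)^3)"
  have gc: "continuous_on {0..1} (\<lambda>y. n y - b y)" by (intro continuous_intros nc b)
  note P = Psi_deriv[OF gc, folded \<Psi>_def]
  have Acont: "continuous_on {0..1} A"
    unfolding A_def using npos by (intro continuous_intros nc) auto
  have ninv: "continuous_on {0..1} (\<lambda>x. 1 / n x)"
    using npos by (intro continuous_intros nc) auto
  have Fai: "(\<lambda>x. A x * nx x) absolutely_integrable_on {a..c}"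
    if "0 < a" "a \<le> c" "c < 1" for a c
  proof (rule absolutely_integrable_bounded_measurable_product_real)
    have co: "continuous_on {a..c} A"
      by (rule continuous_on_subset[OF Acont]) (use that in auto)
    show "A \<in> borel_measurable (lebesgue_on {a..c})"
      by (rule continuous_imp_measurable_on_sets_lebesgue[OF co]) auto
    show "bounded (A ` {a..c})"
      by (rule compact_imp_bounded, rule compact_continuous_image[OF co]) auto
    show "nx absolutely_integrable_on {a..c}"
      using nx that integrable_on_iff_abs[of "{a..c}" nx] by auto
  qed auto
  have Kint: "K integrable_on {x..y}" if "0 < x" "y < 1" for x y
  proof (cases "x \<le> y")
    case True
    have i1: "(\<lambda>x. A x * nx x) integrable_on {x..y}"
      using Fai[of x y] that True by (auto dest: set_lebesgue_integral_eq_integral(1))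
    have i2: "(\<lambda>z. \<alpha> / n z + \<Psi> z) integrable_on {x..y}"
      by (rule integrable_continuous_real, rule continuous_on_subset[of "{0..1}"])
         (use that npos in \<open>auto intro!: continuous_intros nc P(1)\<close>)
    have "(\<lambda>z. A z * nx z + (\<alpha> / n z + \<Psi> z)) integrable_on {x..y}"
      by (rule integrable_add[OF i1 i2])
    then show ?thesis unfolding K_def A_def by (simp add: add.assoc)
  next
    case False
    then have "{x..y} = {}" by auto
    then show ?thesis by (metis has_integral_empty integrable_on_def)
  qed
  have Keq: "integral {s..s+h} K = integral {t..t+h} K"
    if "0 < s" "0 < t" "0 < h" "s + h < 1" "t + h < 1" for s t h
    unfolding K_def \<Psi>_def
    by (rule weak_K[OF b nc npos nx weak that])
  obtain c where c: "\<And>x y. 0 < x \<Longrightarrow> y < 1 \<Longrightarrow> \<exists>N. negligible N \<and> (\<forall>z\<in>{x..y}-N. K z = c)"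
    using K_const[OF Kint Keq] by blast
  define R where "R = (\<lambda>x. (c - \<alpha> / n x - \<Psi> x) / A x)"
  have nint: "n y - n x = integral {x..y} R" if xy: "0 < x" "x \<le> y" "y < 1" for x y
  proof -
    obtain N where N: "negligible N" "\<forall>z\<in>{x..y}-N. K z = c" using c[of x y] xy by blast
    have nxai: "nx absolutely_integrable_on {x..y}"
      using nx xy integrable_on_iff_abs[of "{x..y}" nx] by auto
    have "n y - n x = integral\<^sup>L (lebesgue_on {x..y}) nx" using nx xy by blast
    also have "\<dots> = integral {x..y} nx" by (rule LINT_eq_HK(2)[OF nxai])
    also have "\<dots> = integral {x..y} R"
    proof (rule integral_spike[OF N(1)])
      fix z assume z: "z \<in> {x..y} - N"
      have n1: "1 < n z" using gt z xy by auto
      have Ap: "0 < A z" unfolding A_def by (rule A_pos[OF n1])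
      have "A z * nx z + \<alpha> / n z + \<Psi> z = c" using N(2) z unfolding K_def A_def by auto
      then have "nx z = (c - \<alpha> / n z - \<Psi> z) / A z" using Ap by (simp add: field_simps)
      then show "R z = nx z" unfolding R_def by simp
    qed
    finally show ?thesis .
  qed
  have Rcont: "continuous_on {a..d} R" if ad: "0 < a" "d < 1" for a d
  proof -
    have sub: "{a..d} \<subseteq> {0..1}" using ad by auto
    have nz: "\<forall>x\<in>{a..d}. n x \<noteq> 0" using npos sub by fastforce
    have Az: "\<forall>x\<in>{a..d}. A x \<noteq> 0"
    proof
      fix x assume "x \<in> {a..d}"
      then have "1 < n x" using gt ad by auto
      then show "A x \<noteq> 0" unfolding A_def using A_pos by fastforce
    qed
    have "continuous_on {a..d} (\<lambda>x. (c - \<alpha> / n x - \<Psi> x) / A x)"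
      using nz Az
      by (intro continuous_intros continuous_on_subset[OF nc sub] continuous_on_subset[OF P(1) sub]
            continuous_on_subset[OF Acont sub]) auto
    then show ?thesis unfolding R_def .
  qed
  have "\<forall>x\<in>{0<..<1}. (n has_real_derivative R x) (at x)"
  proof
    fix x0 :: real assume x0: "x0 \<in> {0<..<1}"
    define a where "a = x0 / 2"
    define d where "d = (1 + x0) / 2"
    have ad: "0 < a" "a < x0" "x0 < d" "d < 1" using x0 by (auto simp: a_def d_def)
    have "((\<lambda>u. integral {a..u} R) has_vector_derivative R x0) (at x0 within {a..d})"
      by (rule integral_has_vector_derivative[OF Rcont[OF ad(1,4)]]) (use ad in auto)
    then have "((\<lambda>u. integral {a..u} R) has_vector_derivative R x0) (at x0 within {a<..<d})"
      by (rule has_vector_derivative_within_subset) auto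
    moreover have "at x0 within {a<..<d} = at x0" by (rule at_within_open) (use ad in auto)
    ultimately have "((\<lambda>u. integral {a..u} R) has_real_derivative R x0) (at x0)"
      by (simp add: has_real_derivative_iff_has_vector_derivative)
    then have "((\<lambda>u. n a + integral {a..u} R) has_real_derivative R x0) (at x0)"
      using DERIV_add[OF DERIV_const] by fastforce
    then show "(n has_real_derivative R x0) (at x0)"
    proof (rule has_field_derivative_transform_within_open[where S="{a<..<d}"])
      fix u assume u: "u \<in> {a<..<d}"
      show "n a + integral {a..u} R = n u" using nint[of a u] u ad by auto
    qed (use ad in auto)
  qed
  then show ?thesis unfolding R_def A_def \<Psi>_def by blast
qed



definition BB :: "real \<Rightarrow> real" where "BB m = ln m + 1 / (2 * m^2)"

lemma BB_deriv: "0 < m \<Longrightarrow> (BB has_real_derivative (1 / m - 1 / m ^ 3)) (at m)"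
proof -
  assume m: "0 < m"
  have "((\<lambda>m. ln m + 1 / (2 * m^2)) has_real_derivative (1 / m + (- (2 * (2 * m)) / (2 * m^2)^2))) (at m)"
    using m by (auto intro!: derivative_eq_intros)
  moreover have "1 / m + (- (2 * (2 * m)) / (2 * m^2)^2) = 1 / m - 1 / m ^ 3"
    using m by (simp add: field_simps power2_eq_square power3_eq_cube)
  ultimately show ?thesis unfolding BB_def[abs_def] by simp
qed

lemma BB_cont: "continuous_on {p..q} BB" if "0 < p" for p q
proof -
  have "\<forall>x\<in>{p..q}. isCont BB x"
    using that BB_deriv by (metis DERIV_isCont atLeastAtMost_iff less_le_trans linorder_not_le not_less_iff_gr_or_eq)
  then show ?thesis by (simp add: continuous_at_imp_continuous_on)
qed

lemma BB_strict: "1 \<le> p \<Longrightarrow> p < q \<Longrightarrow> BB p < BB q"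
proof -
  assume pq: "1 \<le> p" "p < q"
  show ?thesis
  proof (rule DERIV_pos_imp_increasing_open[OF pq(2)])
    fix x assume x: "p < x" "x < q"
    show "\<exists>y. (BB has_real_derivative y) (at x) \<and> 0 < y"
      using BB_deriv[of x] A_pos[of x] x pq by auto
  qed (rule BB_cont, use pq in auto)
qed

lemma BB_mono: "1 \<le> p \<Longrightarrow> p \<le> q \<Longrightarrow> BB p \<le> BB q"
  using BB_strict[of p q] by (cases "p = q") auto

lemma left_zero:
  fixes w :: "real \<Rightarrow> real"
  assumes wc: "continuous_on {0..1} w" and w0: "w 0 \<le> 0" and z: "z \<in> {0..1}" "0 < w z"
  obtains x1 where "0 \<le> x1" "x1 < z" "w x1 \<le> 0" "\<And>x. x1 < x \<Longrightarrow> x \<le> z \<Longrightarrow> 0 < w x"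
proof -
  define S where "S = {0..z} \<inter> w -` {..0}"
  have wcz: "continuous_on {0..z} w" by (rule continuous_on_subset[OF wc]) (use z in auto)
  have cl: "closed S" unfolding S_def by (rule continuous_closed_preimage[OF wcz]) auto
  have ne: "S \<noteq> {}" using w0 z unfolding S_def by auto
  have bd: "bdd_above S" unfolding S_def by (rule bdd_aboveI[where M=z]) auto
  have in_S: "Sup S \<in> S" by (rule closed_contains_Sup[OF ne bd cl])
  show ?thesis
  proof (rule that)
    show "0 \<le> Sup S" "w (Sup S) \<le> 0" using in_S unfolding S_def by auto
    have "Sup S \<le> z" using in_S unfolding S_def by auto
    moreover have "Sup S \<noteq> z" using in_S z unfolding S_def by auto
    ultimately show "Sup S < z" by simp
    fix x assume x: "Sup S < x" "x \<le> z"
    show "0 < w x"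
    proof (rule ccontr)
      assume "\<not> 0 < w x"
      then have "x \<in> S" unfolding S_def using x in_S by (auto simp: S_def)
      then have "x \<le> Sup S" by (rule cSup_upper[OF _ bd])
      then show False using x by simp
    qed
  qed
qed

lemma right_zero:
  fixes w :: "real \<Rightarrow> real"
  assumes wc: "continuous_on {0..1} w" and w1: "w 1 \<le> 0" and z: "z \<in> {0..1}" "0 < w z"
  obtains x2 where "x2 \<le> 1" "z < x2" "w x2 \<le> 0" "\<And>x. z \<le> x \<Longrightarrow> x < x2 \<Longrightarrow> 0 < w x"
proof -
  define S where "S = {z..1} \<inter> w -` {..0}"
  have wcz: "continuous_on {z..1} w" by (rule continuous_on_subset[OF wc]) (use z in auto)
  have cl: "closed S" unfolding S_def by (rule continuous_closed_preimage[OF wcz]) auto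
  have ne: "S \<noteq> {}" using w1 z unfolding S_def by auto
  have bd: "bdd_below S" unfolding S_def by (rule bdd_belowI[where m=z]) auto
  have in_S: "Inf S \<in> S" by (rule closed_contains_Inf[OF ne bd cl])
  show ?thesis
  proof (rule that)
    show "Inf S \<le> 1" "w (Inf S) \<le> 0" using in_S unfolding S_def by auto
    have "z \<le> Inf S" using in_S unfolding S_def by auto
    moreover have "Inf S \<noteq> z" using in_S z unfolding S_def by auto
    ultimately show "z < Inf S" by simp
    fix x assume x: "z \<le> x" "x < Inf S"
    show "0 < w x"
    proof (rule ccontr)
      assume "\<not> 0 < w x"
      then have "x \<in> S" unfolding S_def using x in_S by (auto simp: S_def)
      then have "Inf S \<le> x" by (rule cInf_lower[OF _ bd])
      then show False using x by simp
    qed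
  qed
qed



lemma BB_cont_pos: "continuous_on {0<..} BB"
proof -
  have "\<forall>x\<in>{0<..}. isCont BB x" using BB_deriv DERIV_isCont by fastforce
  then show ?thesis by (simp add: continuous_at_imp_continuous_on)
qed

lemma BBn_cont:
  assumes "continuous_on {0..1} n" "\<forall>x\<in>{0..1}. 1 \<le> n x"
  shows "continuous_on {0..1} (\<lambda>x. BB (n x))"
  by (rule continuous_on_compose2[OF BB_cont_pos assms(1)]) (use assms(2) in fastforce)

lemma BBn_deriv:
  fixes n :: "real \<Rightarrow> real"
  assumes d: "(n has_real_derivative ((c - \<alpha> / n x - P) / (1 / n x - 1 / (n x)^3))) (at x)"
    and gt: "1 < n x"
  shows "((\<lambda>x. BB (n x)) has_real_derivative (c - \<alpha> / n x - P)) (at x)"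
proof -
  have Ap: "1 / n x - 1 / (n x)^3 \<noteq> 0" using A_pos[OF gt] by (metis order_less_irrefl)
  have "((\<lambda>x. BB (n x)) has_real_derivative
     (1 / n x - 1 / (n x)^3) * ((c - \<alpha> / n x - P) / (1 / n x - 1 / (n x)^3))) (at x)"
    by (rule DERIV_chain2[OF BB_deriv d]) (use gt in simp)
  moreover have "(1 / n x - 1 / (n x)^3) * ((c - \<alpha> / n x - P) / (1 / n x - 1 / (n x)^3)) = c - \<alpha> / n x - P"
    using Ap by simp
  ultimately show ?thesis by simp
qed

lemma sol_ends:
  assumes "interior_subsonic_solution \<alpha> b n E"
  shows "n 0 = 1" "n 1 = 1" "\<forall>x\<in>{0<..<1}. n x > 1"
  using assms unfolding interior_subsonic_solution_def by auto

theorem lemma3p1: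
  fixes \<alpha> :: real and b1 b2 n1 n2 E1 E2 :: "real \<Rightarrow> real"
  assumes "\<alpha> \<ge> 0"
    and "continuous_on {0..1} b1" and "continuous_on {0..1} b2"
    and "\<forall>x\<in>{0..1}. b1 x \<ge> b2 x \<and> b2 x > 1"
    and "interior_subsonic_solution \<alpha> b1 n1 E1"
    and "interior_subsonic_solution \<alpha> b2 n2 E2"
  shows "\<forall>x\<in>{0..1}. n1 x \<ge> n2 x"
proof (rule ccontr)
  note al = assms(1) and bc1 = assms(2) and bc2 = assms(3) and bb = assms(4)
    and s1 = assms(5) and s2 = assms(6)
  assume "\<not> (\<forall>x\<in>{0..1}. n1 x \<ge> n2 x)"
  then obtain z where z: "z \<in> {0..1}" "n1 z < n2 z" by (auto simp: not_le)
  note nc1 = sol_basic(1)[OF s1] and np1 = sol_basic(2)[OF s1]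
  note nc2 = sol_basic(1)[OF s2] and np2 = sol_basic(2)[OF s2]
  note e1 = sol_ends[OF s1] and e2 = sol_ends[OF s2]
  obtain c1 where d1: "\<forall>x\<in>{0<..<1}. (n1 has_real_derivative
      ((c1 - \<alpha> / n1 x - integral {x..1} (\<lambda>y. n1 y - b1 y)) / (1 / n1 x - 1 / (n1 x)^3))) (at x)"
    using sol_deriv[OF bc1 s1] by blast
  obtain c2 where d2: "\<forall>x\<in>{0<..<1}. (n2 has_real_derivative
      ((c2 - \<alpha> / n2 x - integral {x..1} (\<lambda>y. n2 y - b2 y)) / (1 / n2 x - 1 / (n2 x)^3))) (at x)"
    using sol_deriv[OF bc2 s2] by blast
  define \<Psi>1 where "\<Psi>1 = (\<lambda>x. integral {x..1} (\<lambda>y. n1 y - b1 y))"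
  define \<Psi>2 where "\<Psi>2 = (\<lambda>x. integral {x..1} (\<lambda>y. n2 y - b2 y))"
  define w where "w = (\<lambda>x. n2 x - n1 x)"
  define G where "G = (\<lambda>x. c2 - c1 - \<Psi>2 x + \<Psi>1 x)"
  define H where "H = (\<lambda>x. G x + \<alpha> * (1 / n1 x - 1 / n2 x))"
  define D where "D = (\<lambda>x. BB (n2 x) - BB (n1 x))"
  have gc1: "continuous_on {0..1} (\<lambda>y. n1 y - b1 y)" by (intro continuous_intros nc1 bc1)
  have gc2: "continuous_on {0..1} (\<lambda>y. n2 y - b2 y)" by (intro continuous_intros nc2 bc2)
  note P1 = Psi_deriv[OF gc1, folded \<Psi>1_def] and P2 = Psi_deriv[OF gc2, folded \<Psi>2_def]
  have wc: "continuous_on {0..1} w" unfolding w_def by (intro continuous_intros nc1 nc2)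
  have Gc: "continuous_on {0..1} G" unfolding G_def by (intro continuous_intros P1(1) P2(1))
  have Hc: "continuous_on {0..1} H" unfolding H_def
    using np1 np2 by (intro continuous_intros Gc nc1 nc2) fastforce+
  have Dc: "continuous_on {0..1} D" unfolding D_def
    by (intro continuous_intros BBn_cont nc1 nc2 np1 np2)
  have Dd: "(D has_real_derivative H x) (at x)" if x: "x \<in> {0<..<1}" for x
  proof -
    have a1: "((\<lambda>x. BB (n1 x)) has_real_derivative (c1 - \<alpha> / n1 x - \<Psi>1 x)) (at x)"
      unfolding \<Psi>1_def by (rule BBn_deriv) (use d1 e1 x in auto)
    have a2: "((\<lambda>x. BB (n2 x)) has_real_derivative (c2 - \<alpha> / n2 x - \<Psi>2 x)) (at x)"
      unfolding \<Psi>2_def by (rule BBn_deriv) (use d2 e2 x in auto)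
    have "(D has_real_derivative ((c2 - \<alpha> / n2 x - \<Psi>2 x) - (c1 - \<alpha> / n1 x - \<Psi>1 x))) (at x)"
      unfolding D_def by (rule DERIV_diff[OF a2 a1])
    moreover have "(c2 - \<alpha> / n2 x - \<Psi>2 x) - (c1 - \<alpha> / n1 x - \<Psi>1 x) = H x"
      unfolding H_def G_def by (simp add: algebra_simps)
    ultimately show ?thesis by simp
  qed
  have Gd: "(G has_real_derivative (w x + (b1 x - b2 x))) (at x)" if x: "x \<in> {0<..<1}" for x
  proof -
    have "(G has_real_derivative (0 - (- (n2 x - b2 x)) + (- (n1 x - b1 x)))) (at x)"
      unfolding G_def by (intro DERIV_add DERIV_diff DERIV_const P1(2) P2(2) x)
    moreover have "0 - (- (n2 x - b2 x)) + (- (n1 x - b1 x)) = w x + (b1 x - b2 x)"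
      unfolding w_def by simp
    ultimately show ?thesis by metis
  qed
  have Dneg: "D x \<le> 0" if "x \<in> {0..1}" "w x \<le> 0" for x
    using BB_mono[of "n2 x" "n1 x"] np2 that unfolding D_def w_def by auto
  have Dpos: "0 < D x" if "x \<in> {0..1}" "0 < w x" for x
    using BB_strict[of "n1 x" "n2 x"] np1 that unfolding D_def w_def by auto
  have wz: "0 < w z" using z unfolding w_def by simp
  have w0: "w 0 \<le> 0" "w 1 \<le> 0" using e1 e2 unfolding w_def by auto
  obtain x1 where x1: "0 \<le> x1" "x1 < z" "w x1 \<le> 0" "\<And>x. x1 < x \<Longrightarrow> x \<le> z \<Longrightarrow> 0 < w x"
    using left_zero[OF wc w0(1) z(1) wz] by blast
  obtain x2 where x2: "x2 \<le> 1" "z < x2" "w x2 \<le> 0" "\<And>x. z \<le> x \<Longrightarrow> x < x2 \<Longrightarrow> 0 < w x"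
    using right_zero[OF wc w0(2) z(1) wz] by blast
  have z01: "0 < z" "z < 1" using x1 x2 by auto
  show False
  proof (cases "G x1 < 0")
    case True
    have "\<alpha> * (1 / n1 x1 - 1 / n2 x1) \<le> 0"
    proof (rule mult_nonneg_nonpos[OF al])
      have "1 \<le> n2 x1" using np2 x1 z01 by auto
      moreover have "n2 x1 \<le> n1 x1" using x1(3) unfolding w_def by simp
      ultimately have "1 / n1 x1 \<le> 1 / n2 x1" by (intro divide_left_mono) auto
      then show "1 / n1 x1 - 1 / n2 x1 \<le> 0" by simp
    qed
    then have Hx1: "H x1 < 0" using True unfolding H_def by simp
    have x1I: "x1 \<in> {0..1}" using x1 z01 by auto
    obtain d where d: "d > 0" "\<And>x'. x' \<in> {0..1} \<Longrightarrow> dist x' x1 < d \<Longrightarrow> dist (H x') (H x1) < - H x1"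
      using Hc x1I Hx1 unfolding continuous_on_iff by (metis neg_0_less_iff_less)
    define y where "y = min (x1 + d / 2) z"
    have y: "x1 < y" "y \<le> z" using d x1 by (auto simp: y_def)
    have "D y < D x1"
    proof (rule DERIV_neg_imp_decreasing_open[where f=D, OF y(1)])
      fix x assume x: "x1 < x" "x < y"
      have xI: "x \<in> {0<..<1}" using x y x1 z01 by auto
      have "dist x x1 < d" using x y d by (auto simp: y_def dist_real_def)
      then have "dist (H x) (H x1) < - H x1" using d(2)[of x] xI by auto
      then have "H x < 0" by (simp add: dist_real_def)
      then show "\<exists>y. (D has_real_derivative y) (at x) \<and> y < 0" using Dd[OF xI] by blast
    next
      show "continuous_on {x1..y} D" by (rule continuous_on_subset[OF Dc]) (use x1 y z01 in auto)
    qed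
    moreover have "D x1 \<le> 0" by (rule Dneg[OF x1I x1(3)])
    moreover have "0 < D y" by (rule Dpos) (use x1 y z01 in auto)
    ultimately show False by simp
  next
    case False
    have wpos: "0 < w x" if "x1 < x" "x < x2" for x
      using x1(4)[of x] x2(4)[of x] that by (cases "x \<le> z") auto
    have Hpos: "0 \<le> H x" if x: "x1 < x" "x < x2" for x
    proof -
      have "G x1 \<le> G x"
      proof (rule DERIV_nonneg_imp_increasing_open[where f=G and a=x1 and b=x])
        show "x1 \<le> x" using x by simp
        fix t assume t: "x1 < t" "t < x"
        have tI: "t \<in> {0<..<1}" using t x x1 x2 by auto
        have "0 < w t" using wpos t x by auto
        moreover have "b2 t \<le> b1 t" using bb tI by auto
        ultimately show "\<exists>y. (G has_real_derivative y) (at t) \<and> 0 \<le> y"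
          using Gd[OF tI] by (intro exI[where x="w t + (b1 t - b2 t)"]) auto
      next
        show "continuous_on {x1..x} G" by (rule continuous_on_subset[OF Gc]) (use x x1 x2 in auto)
      qed
      then have G0: "0 \<le> G x" using False by simp
      have "0 \<le> \<alpha> * (1 / n1 x - 1 / n2 x)"
      proof (rule mult_nonneg_nonneg[OF al])
        have "1 \<le> n1 x" using np1 x x1 x2 by auto
        moreover have "n1 x \<le> n2 x" using wpos[OF x] unfolding w_def by simp
        ultimately have "1 / n2 x \<le> 1 / n1 x" by (intro divide_left_mono) auto
        then show "0 \<le> 1 / n1 x - 1 / n2 x" by simp
      qed
      then show ?thesis using G0 unfolding H_def by simp
    qed
    have "D z \<le> D x2"
    proof (rule DERIV_nonneg_imp_increasing_open[where f=D and a=z and b=x2])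
      show "z \<le> x2" using x2 by simp
      fix x assume x: "z < x" "x < x2"
      have xI: "x \<in> {0<..<1}" using x z01 x2 by auto
      show "\<exists>y. (D has_real_derivative y) (at x) \<and> 0 \<le> y"
        using Dd[OF xI] Hpos[of x] x x1 by (intro exI[where x="H x"]) auto
    next
      show "continuous_on {z..x2} D" by (rule continuous_on_subset[OF Dc]) (use z01 x2 in auto)
    qed
    moreover have "D x2 \<le> 0" by (rule Dneg) (use x2 z01 in auto)
    moreover have "0 < D z" by (rule Dpos) (use z01 wz in auto)
    ultimately show False by simp
  qed
qed


end
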